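(* Let $\alpha=(\alpha_0,\dots,\alpha_5)\in\mathbb{R}^6$ lie in the polytope $\hat P_{II}$ given by \[ -\tfrac12\le\alpha_0<0,\quad \alpha_0<\alpha_r\le1+\alpha_0\ (1\le r\le5),\quad 0\le\alpha_r+\alpha_s\le1\ (1\le r<s\le5), \] \[ 2\alpha_0=\sum_{r>0:\alpha_r+\alpha_0<0}(\alpha_r+\alpha_0),\qquad\sum_{r=0}^5\alpha_r=1. \] For $\zeta=(\zeta_1,\dots,\zeta_n)\in\mathbb{R}^n$ define \[ c(\zeta)=\frac12\sum_{i=1}^n\Big[2\zeta_i^2-2\alpha_0^2+\sum_{r\ge1:\alpha_r<-\alpha_0}(\alpha_r+\alpha_0)^2-\sum_{r\ge1:\alpha_r<-|\zeta_i|}(2\alpha_r^2+2\zeta_i^2)-\sum_{r\ge1:-|\zeta_i|\le\alpha_r<|\zeta_i|}(\alpha_r-|\zeta_i|)^2\Big], \] sums over $1\le r\le5$. Then for $\alpha_0\le\zeta_i\le-\alpha_0$ ($1\le i\le n$) we have $c(\zeta)\le0$, and equality holds only if either $\alpha_r+\alpha_s=0$ for some $1\le r<s\le 5$, or $\zeta_i=\pm\alpha_0$ for all $i$. *)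

theory Defs
  imports Complex_Main
begin

(* alpha = (alpha 0, ..., alpha 5); only indices 0..5 are used. *)
definition in_P_II :: "(nat \<Rightarrow> real) \<Rightarrow> bool" where
  "in_P_II \<alpha> \<longleftrightarrow>
     - (1/2) \<le> \<alpha> 0 \<and> \<alpha> 0 < 0 \<and>
     (\<forall>r\<in>{1..5}. \<alpha> 0 < \<alpha> r \<and> \<alpha> r \<le> 1 + \<alpha> 0) \<and>
     (\<forall>r\<in>{1..5}. \<forall>s\<in>{1..5}. r < s \<longrightarrow> 0 \<le> \<alpha> r + \<alpha> s \<and> \<alpha> r + \<alpha> s \<le> 1) \<and>
     2 * \<alpha> 0 = (\<Sum>r\<in>{r\<in>{1..5}. \<alpha> r + \<alpha> 0 < 0}. \<alpha> r + \<alpha> 0) \<and>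
     (\<Sum>r\<in>{0..5}. \<alpha> r) = 1"

definition c_fun :: "(nat \<Rightarrow> real) \<Rightarrow> nat \<Rightarrow> (nat \<Rightarrow> real) \<Rightarrow> real" where
  "c_fun \<alpha> n \<zeta> = (1/2) * (\<Sum>i\<in>{1..n}.
      2 * (\<zeta> i)\<^sup>2 - 2 * (\<alpha> 0)\<^sup>2
      + (\<Sum>r\<in>{r\<in>{1..5}. \<alpha> r < - \<alpha> 0}. (\<alpha> r + \<alpha> 0)\<^sup>2)
      - (\<Sum>r\<in>{r\<in>{1..5}. \<alpha> r < - \<bar>\<zeta> i\<bar>}. 2 * (\<alpha> r)\<^sup>2 + 2 * (\<zeta> i)\<^sup>2)
      - (\<Sum>r\<in>{r\<in>{1..5}. - \<bar>\<zeta> i\<bar> \<le> \<alpha> r \<and> \<alpha> r < \<bar>\<zeta> i\<bar>}. (\<alpha> r - \<bar>\<zeta> i\<bar>)\<^sup>2))"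

end

theory Submission imports Defs begin

definition DD :: "real \<Rightarrow> real \<Rightarrow> real \<Rightarrow> real" where
  "DD a t x = (if x < a then (x - a)\<^sup>2 else 0) - (if x < - t then 2 * x\<^sup>2 + 2 * t\<^sup>2 else 0)
     - (if - t \<le> x \<and> x < t then (x - t)\<^sup>2 else 0)"

definition ww :: "real \<Rightarrow> real \<Rightarrow> real" where
  "ww a x = (if x < a then a - x else 0)"

lemma LA:
  fixes a t x :: real
  assumes "0<a" "0\<le>t" "t\<le>a" "0\<le>x"
  shows "a * DD a t x \<le> ww a x * ((a-t)*(a+t))"
    and "t < a \<Longrightarrow> 0 < x \<Longrightarrow> x < a \<Longrightarrow> a * DD a t x < ww a x * ((a-t)*(a+t))"
proof -
  have c1: "x < a \<Longrightarrow> x < t \<Longrightarrow> ww a x * ((a-t)*(a+t)) - a * DD a t x = x*(a-t)\<^sup>2"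
    using assms by (simp add: DD_def ww_def power2_eq_square algebra_simps)
  have c2: "x < a \<Longrightarrow> \<not> x < t \<Longrightarrow> ww a x * ((a-t)*(a+t)) - a * DD a t x = (a-x)*(a*x - t\<^sup>2)"
    using assms by (simp add: DD_def ww_def power2_eq_square algebra_simps)
  have c3: "\<not> x < a \<Longrightarrow> DD a t x = 0 \<and> ww a x = 0"
    using assms by (simp add: DD_def ww_def)
  have sq: "\<not> x < t \<Longrightarrow> t\<^sup>2 \<le> x\<^sup>2" using assms by (simp add: power_mono)
  have ax: "x\<^sup>2 \<le> a * x" if "x < a" using that assms by (simp add: power2_eq_square mult_right_mono)
  show "a * DD a t x \<le> ww a x * ((a-t)*(a+t))"
  proof (cases "x < a")
    case True
    show ?thesis
    proof (cases "x < t")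
      case True
      with c1 \<open>x<a\<close> show ?thesis using assms by (smt (verit) mult_nonneg_nonneg zero_le_power2)
    next
      case False
      with c2 \<open>x<a\<close> sq ax show ?thesis using assms by (smt (verit) mult_nonneg_nonneg)
    qed
  next
    case False with c3 show ?thesis by simp
  qed
  assume h: "t < a" "0 < x" "x < a"
  show "a * DD a t x < ww a x * ((a-t)*(a+t))"
  proof (cases "x < t")
    case True
    have "0 < x*(a-t)\<^sup>2" using h by simp
    with c1 h True show ?thesis by linarith
  next
    case False
    have "x\<^sup>2 < a*x" using h by (simp add: power2_eq_square)
    hence "0 < (a-x)*(a*x - t\<^sup>2)" using sq False h by simp
    with c2 h False show ?thesis by linarith
  qed
qed

lemma LB0:
  fixes a t c :: real
  assumes "0<c" "c<a" "0\<le>t" "t\<le>a"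
  shows "DD a t (-c) = (if t < c then (a+c)\<^sup>2 - 2*c\<^sup>2 - 2*t\<^sup>2 else (a-t)*(a+t+2*c))"
  using assms by (auto simp: DD_def power2_eq_square algebra_simps)

lemma LB1:
  fixes a t c x :: real
  assumes "0<c" "c\<le>x" "c\<le>t" "t\<le>a"
  shows "(a-c) * DD a t x \<le> ww a x * ((a-t)*(a+t-2*c))"
    and "t < a \<Longrightarrow> c < x \<Longrightarrow> x < a \<Longrightarrow> (a-c) * DD a t x < ww a x * ((a-t)*(a+t-2*c))"
proof -
  have c1: "x < a \<Longrightarrow> x < t \<Longrightarrow> ww a x * ((a-t)*(a+t-2*c)) - (a-c) * DD a t x = (x-c)*(a-t)\<^sup>2"
    using assms by (simp add: DD_def ww_def power2_eq_square algebra_simps)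
  have c2: "x < a \<Longrightarrow> \<not> x < t \<Longrightarrow> ww a x * ((a-t)*(a+t-2*c)) - (a-c) * DD a t x = (a-x)*((a-c)*(x-c) - (t-c)\<^sup>2)"
    using assms by (simp add: DD_def ww_def power2_eq_square algebra_simps)
  have c3: "\<not> x < a \<Longrightarrow> DD a t x = 0 \<and> ww a x = 0"
    using assms by (simp add: DD_def ww_def)
  have sq: "\<not> x < t \<Longrightarrow> (t-c)\<^sup>2 \<le> (x-c)\<^sup>2" using assms by (simp add: power_mono)
  have ax: "(x-c)\<^sup>2 \<le> (a-c) * (x-c)" if "x < a" using that assms by (simp add: power2_eq_square mult_right_mono)
  show "(a-c) * DD a t x \<le> ww a x * ((a-t)*(a+t-2*c))"
  proof (cases "x < a")
    case True
    show ?thesis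
    proof (cases "x < t")
      case True
      with c1 \<open>x<a\<close> show ?thesis using assms by (smt (verit) mult_nonneg_nonneg zero_le_power2)
    next
      case False
      with c2 \<open>x<a\<close> sq ax show ?thesis using assms by (smt (verit) mult_nonneg_nonneg)
    qed
  next
    case False with c3 show ?thesis by simp
  qed
  assume h: "t < a" "c < x" "x < a"
  show "(a-c) * DD a t x < ww a x * ((a-t)*(a+t-2*c))"
  proof (cases "x < t")
    case True
    have "0 < (x-c)*(a-t)\<^sup>2" using h by simp
    with c1 h True show ?thesis by linarith
  next
    case False
    have "(x-c)\<^sup>2 < (a-c)*(x-c)" using h by (simp add: power2_eq_square)
    hence "0 < (a-x)*((a-c)*(x-c) - (t-c)\<^sup>2)" using sq False h by simp
    with c2 h False show ?thesis by linarith
  qed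
qed

lemma LB2:
  fixes a t c x :: real
  assumes "0\<le>t" "t<c" "c\<le>x"
  shows "DD a t x \<le> ww a x * (a-c)"
    and "c < x \<Longrightarrow> x < a \<Longrightarrow> DD a t x < ww a x * (a-c)"
proof -
  have e: "DD a t x = (if x < a then (a-x)*(a-x) else 0)"
    using assms by (simp add: DD_def power2_eq_square algebra_simps)
  show "DD a t x \<le> ww a x * (a-c)"
    unfolding e ww_def using assms by (simp add: mult_left_mono)
  assume "c < x" "x < a"
  then show "DD a t x < ww a x * (a-c)"
    unfolding e ww_def using assms by (simp add: mult_strict_left_mono)
qed


lemma key:
  fixes b :: "nat \<Rightarrow> real" and I :: "nat set" and a t :: real
  assumes fin: "finite I" and a: "0<a" and lb: "\<forall>r\<in>I. -a < b r"
    and pw: "\<forall>r\<in>I. \<forall>s\<in>I. r\<noteq>s \<longrightarrow> 0 \<le> b r + b s"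
    and sw: "(\<Sum>r\<in>I. ww a (b r)) = 2*a"
    and t0: "0\<le>t" and ta: "t\<le>a"
  shows "(\<Sum>r\<in>I. DD a t (b r)) \<le> 2*(a\<^sup>2-t\<^sup>2) \<and>
    ((t<a \<and> \<not>(\<exists>r\<in>I. \<exists>s\<in>I. r\<noteq>s \<and> b r + b s = 0)) \<longrightarrow> (\<Sum>r\<in>I. DD a t (b r)) < 2*(a\<^sup>2-t\<^sup>2))"
proof (cases "\<forall>r\<in>I. 0 \<le> b r")
  case True
  have le: "a * (\<Sum>r\<in>I. DD a t (b r)) \<le> (\<Sum>r\<in>I. ww a (b r)) * ((a-t)*(a+t))"
    unfolding sum_distrib_left sum_distrib_right
    by (rule sum_mono) (use LA(1)[OF a t0 ta] True in blast)
  have eq: "2*(a\<^sup>2-t\<^sup>2) * a = (\<Sum>r\<in>I. ww a (b r)) * ((a-t)*(a+t))"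
    using sw by (simp add: power2_eq_square algebra_simps)
  show ?thesis
  proof
    show "(\<Sum>r\<in>I. DD a t (b r)) \<le> 2*(a\<^sup>2-t\<^sup>2)"
    proof -
      have e2: "a * (2*(a\<^sup>2-t\<^sup>2)) = (\<Sum>r\<in>I. ww a (b r)) * ((a-t)*(a+t))" using eq by (simp only: mult.commute)
      have "a * (\<Sum>r\<in>I. DD a t (b r)) \<le> a * (2*(a\<^sup>2-t\<^sup>2))" using le e2 by linarith
      then show ?thesis using a by (simp add: mult_le_cancel_left_pos)
    qed
    show "t < a \<and> \<not> (\<exists>r\<in>I. \<exists>s\<in>I. r \<noteq> s \<and> b r + b s = 0) \<longrightarrow> (\<Sum>r\<in>I. DD a t (b r)) < 2 * (a\<^sup>2 - t\<^sup>2)"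
    proof
      assume h: "t < a \<and> \<not> (\<exists>r\<in>I. \<exists>s\<in>I. r \<noteq> s \<and> b r + b s = 0)"
      have ex: "\<exists>r\<in>I. 0 < b r \<and> b r < a"
      proof (rule ccontr)
        assume nx: "\<not> ?thesis"
        define S where "S = {r\<in>I. b r < a}"
        have z: "\<forall>r\<in>S. b r = 0" using nx True unfolding S_def by force
        have "(\<Sum>r\<in>I. ww a (b r)) = (\<Sum>r\<in>S. ww a (b r))"
          unfolding S_def using fin by (intro sum.mono_neutral_right) (auto simp: ww_def)
        also have "\<dots> = (\<Sum>r\<in>S. a)" using z by (intro sum.cong) (auto simp: ww_def S_def)
        also have "\<dots> = real (card S) * a" by simp
        finally have "real (card S) = 2" using sw a by simp
        hence "card S = 2" by linarith
        then obtain x y where xy: "S = {x,y}" "x \<noteq> y" by (auto simp: card_2_iff)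
        have xS: "x \<in> S" "y \<in> S" unfolding xy(1) by simp_all
        have "x \<in> I" "y \<in> I" using xS unfolding S_def by simp_all
        moreover have "b x = 0" "b y = 0" using z xS by simp_all
        ultimately show False using h xy(2) by fastforce
      qed
      then obtain r1 where r1: "r1\<in>I" "0 < b r1" "b r1 < a" by blast
      have lt: "a * (\<Sum>r\<in>I. DD a t (b r)) < (\<Sum>r\<in>I. ww a (b r)) * ((a-t)*(a+t))"
        unfolding sum_distrib_left sum_distrib_right
        proof (rule sum_strict_mono_ex1)
          show "finite I" by fact
          show "\<forall>x\<in>I. a * DD a t (b x) \<le> ww a (b x) * ((a - t) * (a + t))" proof
            fix x assume "x \<in> I" then show "a * DD a t (b x) \<le> ww a (b x) * ((a - t) * (a + t))" using LA(1)[OF a t0 ta, of "b x"] True by blast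
          qed
          show "\<exists>x\<in>I. a * DD a t (b x) < ww a (b x) * ((a - t) * (a + t))" using LA(2)[OF a t0 ta, of "b r1"] r1 True h by blast
        qed
      show "(\<Sum>r\<in>I. DD a t (b r)) < 2*(a\<^sup>2-t\<^sup>2)"
      proof -
        have e2: "a * (2*(a\<^sup>2-t\<^sup>2)) = (\<Sum>r\<in>I. ww a (b r)) * ((a-t)*(a+t))" using eq by (simp only: mult.commute)
        have "a * (\<Sum>r\<in>I. DD a t (b r)) < a * (2*(a\<^sup>2-t\<^sup>2))" using lt e2 by linarith
        then show ?thesis using a by (simp add: mult_less_cancel_left_pos)
      qed
    qed
  qed
next
  case False
  then obtain r0 where r0: "r0 \<in> I" "b r0 < 0" by force
  define c where "c = - b r0"
  have c0: "0 < c" "c < a" using r0 lb c_def by auto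
  have br0: "b r0 = -c" using c_def by simp
  have oth: "\<forall>r\<in>I-{r0}. c \<le> b r" using pw r0 c_def by fastforce
  have swr: "(\<Sum>r\<in>I. ww a (b r)) = ww a (b r0) + (\<Sum>r\<in>I-{r0}. ww a (b r))"
    by (rule sum.remove[OF fin r0(1)])
  have sdr: "(\<Sum>r\<in>I. DD a t (b r)) = DD a t (b r0) + (\<Sum>r\<in>I-{r0}. DD a t (b r))"
    by (rule sum.remove[OF fin r0(1)])
  have w0: "ww a (b r0) = a + c" using br0 c0 by (simp add: ww_def)
  have so: "(\<Sum>r\<in>I-{r0}. ww a (b r)) = a - c" using swr sw w0 by simp
  have strictex: "\<exists>r\<in>I-{r0}. c < b r \<and> b r < a"
    if h: "\<not>(\<exists>r\<in>I. \<exists>s\<in>I. r\<noteq>s \<and> b r + b s = 0)"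
  proof (rule ccontr)
    assume nx: "\<not> ?thesis"
    have "(\<Sum>r\<in>I-{r0}. ww a (b r)) \<noteq> 0" using so c0 by simp
    then obtain r where r: "r \<in> I-{r0}" "ww a (b r) \<noteq> 0" by (meson sum.neutral)
    hence "b r < a" by (auto simp: ww_def split: if_splits)
    hence "b r = c" using nx r oth by force
    thus False using h r r0 br0 by force
  qed
  show ?thesis
  proof (cases "t < c")
    case True
    have d0: "DD a t (b r0) = (a+c)\<^sup>2 - 2*c\<^sup>2 - 2*t\<^sup>2" using LB0[OF c0 t0 ta] True br0 by simp
    have le: "(\<Sum>r\<in>I-{r0}. DD a t (b r)) \<le> (\<Sum>r\<in>I-{r0}. ww a (b r)) * (a-c)"
      unfolding sum_distrib_right
      by (rule sum_mono) (use LB2(1)[OF t0 True] oth in blast)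
    have fin2: "2*(a\<^sup>2-t\<^sup>2) = (a+c)\<^sup>2 - 2*c\<^sup>2 - 2*t\<^sup>2 + (a-c)*(a-c)"
      by (simp add: power2_eq_square algebra_simps)
    show ?thesis
    proof
      show "(\<Sum>r\<in>I. DD a t (b r)) \<le> 2*(a\<^sup>2-t\<^sup>2)"
        using le sdr d0 so fin2 by simp
      show "t < a \<and> \<not> (\<exists>r\<in>I. \<exists>s\<in>I. r \<noteq> s \<and> b r + b s = 0) \<longrightarrow> (\<Sum>r\<in>I. DD a t (b r)) < 2 * (a\<^sup>2 - t\<^sup>2)"
      proof
        assume h: "t < a \<and> \<not> (\<exists>r\<in>I. \<exists>s\<in>I. r \<noteq> s \<and> b r + b s = 0)"
        then obtain r1 where r1: "r1 \<in> I-{r0}" "c < b r1" "b r1 < a" using strictex by blast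
        have "(\<Sum>r\<in>I-{r0}. DD a t (b r)) < (\<Sum>r\<in>I-{r0}. ww a (b r)) * (a-c)"
          unfolding sum_distrib_right
          proof (rule sum_strict_mono_ex1)
            show "finite (I-{r0})" using fin by simp
            show "\<forall>x\<in>I-{r0}. DD a t (b x) \<le> ww a (b x) * (a-c)" using LB2(1)[OF t0 True] oth by blast
            show "\<exists>x\<in>I-{r0}. DD a t (b x) < ww a (b x) * (a-c)" using LB2(2)[OF t0 True] oth r1 by blast
          qed
        then show "(\<Sum>r\<in>I. DD a t (b r)) < 2*(a\<^sup>2-t\<^sup>2)"
          using sdr d0 so fin2 by simp
      qed
    qed
  next
    case False
    hence tc: "c \<le> t" by simp
    have d0: "DD a t (b r0) = (a-t)*(a+t+2*c)" using LB0[OF c0 t0 ta] False br0 by simp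
    have le: "(a-c) * (\<Sum>r\<in>I-{r0}. DD a t (b r)) \<le> (\<Sum>r\<in>I-{r0}. ww a (b r)) * ((a-t)*(a+t-2*c))"
      unfolding sum_distrib_right sum_distrib_left
      by (rule sum_mono) (use LB1(1)[OF c0(1) _ tc ta] oth in blast)
    have fin2: "2*(a\<^sup>2-t\<^sup>2) = (a-t)*(a+t+2*c) + (a-t)*(a+t-2*c)"
      by (simp add: power2_eq_square algebra_simps)
    have ac: "0 < a - c" using c0 by simp
    show ?thesis
    proof
      have "(\<Sum>r\<in>I-{r0}. DD a t (b r)) \<le> (a-t)*(a+t-2*c)"
        using le so ac by (metis mult_le_cancel_left_pos mult.commute)
      then show "(\<Sum>r\<in>I. DD a t (b r)) \<le> 2*(a\<^sup>2-t\<^sup>2)"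
        using sdr d0 fin2 by simp
      show "t < a \<and> \<not> (\<exists>r\<in>I. \<exists>s\<in>I. r \<noteq> s \<and> b r + b s = 0) \<longrightarrow> (\<Sum>r\<in>I. DD a t (b r)) < 2 * (a\<^sup>2 - t\<^sup>2)"
      proof
        assume h: "t < a \<and> \<not> (\<exists>r\<in>I. \<exists>s\<in>I. r \<noteq> s \<and> b r + b s = 0)"
        then obtain r1 where r1: "r1 \<in> I-{r0}" "c < b r1" "b r1 < a" using strictex by blast
        have "(a-c) * (\<Sum>r\<in>I-{r0}. DD a t (b r)) < (\<Sum>r\<in>I-{r0}. ww a (b r)) * ((a-t)*(a+t-2*c))"
          unfolding sum_distrib_right sum_distrib_left
          proof (rule sum_strict_mono_ex1)
            show "finite (I-{r0})" using fin by simp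
            show "\<forall>x\<in>I-{r0}. (a-c) * DD a t (b x) \<le> ww a (b x) * ((a-t)*(a+t-2*c))" using LB1(1)[OF c0(1) _ tc ta] oth by blast
            show "\<exists>x\<in>I-{r0}. (a-c) * DD a t (b x) < ww a (b x) * ((a-t)*(a+t-2*c))" using LB1(2)[OF c0(1) _ tc ta] oth r1 h by blast
          qed
        hence "(\<Sum>r\<in>I-{r0}. DD a t (b r)) < (a-t)*(a+t-2*c)"
          using so ac by (metis mult_less_cancel_left_pos mult.commute)
        then show "(\<Sum>r\<in>I. DD a t (b r)) < 2*(a\<^sup>2-t\<^sup>2)"
          using sdr d0 fin2 by simp
      qed
    qed
  qed
qed


lemma inner_eq:
  fixes \<alpha> :: "nat \<Rightarrow> real" and z :: real
  shows "2 * z\<^sup>2 - 2 * (\<alpha> 0)\<^sup>2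
      + (\<Sum>r\<in>{r\<in>{1..5}. \<alpha> r < - \<alpha> 0}. (\<alpha> r + \<alpha> 0)\<^sup>2)
      - (\<Sum>r\<in>{r\<in>{1..5}. \<alpha> r < - \<bar>z\<bar>}. 2 * (\<alpha> r)\<^sup>2 + 2 * z\<^sup>2)
      - (\<Sum>r\<in>{r\<in>{1..5}. - \<bar>z\<bar> \<le> \<alpha> r \<and> \<alpha> r < \<bar>z\<bar>}. (\<alpha> r - \<bar>z\<bar>)\<^sup>2)
    = 2 * \<bar>z\<bar>\<^sup>2 - 2 * (- \<alpha> 0)\<^sup>2 + (\<Sum>r\<in>{1..5::nat}. DD (- \<alpha> 0) \<bar>z\<bar> (\<alpha> r))"
proof -
  have fin: "finite {1..5::nat}" by simp
  show ?thesis
    unfolding DD_def sum_subtractf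
    unfolding sum.inter_filter[OF fin, symmetric]
    by (simp add: power2_eq_square algebra_simps)
qed

theorem lemmaA5:
  fixes \<alpha> \<zeta> :: "nat \<Rightarrow> real" and n :: nat
  assumes "in_P_II \<alpha>"
    and "\<forall>i\<in>{1..n}. \<alpha> 0 \<le> \<zeta> i \<and> \<zeta> i \<le> - \<alpha> 0"
  shows "c_fun \<alpha> n \<zeta> \<le> 0 \<and>
    (c_fun \<alpha> n \<zeta> = 0 \<longrightarrow>
      (\<exists>r\<in>{1..5}. \<exists>s\<in>{1..5}. r < s \<and> \<alpha> r + \<alpha> s = 0) \<or>
      (\<forall>i\<in>{1..n}. \<zeta> i = \<alpha> 0 \<or> \<zeta> i = - \<alpha> 0))"
proof -
  define a where "a = - \<alpha> 0"
  have P: "- (1/2) \<le> \<alpha> 0" "\<alpha> 0 < 0"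
     "\<forall>r\<in>{1..5}. \<alpha> 0 < \<alpha> r \<and> \<alpha> r \<le> 1 + \<alpha> 0"
     "\<forall>r\<in>{1..5}. \<forall>s\<in>{1..5}. r < s \<longrightarrow> 0 \<le> \<alpha> r + \<alpha> s \<and> \<alpha> r + \<alpha> s \<le> 1"
     "2 * \<alpha> 0 = (\<Sum>r\<in>{r\<in>{1..5}. \<alpha> r + \<alpha> 0 < 0}. \<alpha> r + \<alpha> 0)"
    using assms(1) unfolding in_P_II_def by auto
  have fin: "finite {1..5::nat}" by simp
  have a0: "0 < a" using P a_def by simp
  have lb: "\<forall>r\<in>{1..5}. -a < \<alpha> r" using P(3) a_def by auto
  have pw: "\<forall>r\<in>{1..5}. \<forall>s\<in>{1..5}. r\<noteq>s \<longrightarrow> 0 \<le> \<alpha> r + \<alpha> s"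
  proof (intro ballI impI)
    fix r s :: nat assume rs: "r \<in> {1..5}" "s \<in> {1..5}" "r \<noteq> s"
    show "0 \<le> \<alpha> r + \<alpha> s"
    proof (cases "r < s")
      case True then show ?thesis using P(4) rs by blast
    next
      case False then have "s < r" using rs by simp
      then show ?thesis using P(4) rs by fastforce
    qed
  qed
  have sw: "(\<Sum>r\<in>{1..5}. ww a (\<alpha> r)) = 2*a"
  proof -
    have "(\<Sum>r\<in>{1..5}. ww a (\<alpha> r)) = - (\<Sum>r\<in>{1..5}. if \<alpha> r + \<alpha> 0 < 0 then \<alpha> r + \<alpha> 0 else 0)"
      unfolding sum_negf[symmetric] by (intro sum.cong) (auto simp: ww_def a_def)
    also have "\<dots> = - (2 * \<alpha> 0)" using P(5) unfolding sum.inter_filter[OF fin] by simp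
    finally show ?thesis using a_def by simp
  qed
  define F where "F i = 2 * (\<zeta> i)\<^sup>2 - 2 * (\<alpha> 0)\<^sup>2
      + (\<Sum>r\<in>{r\<in>{1..5}. \<alpha> r < - \<alpha> 0}. (\<alpha> r + \<alpha> 0)\<^sup>2)
      - (\<Sum>r\<in>{r\<in>{1..5}. \<alpha> r < - \<bar>\<zeta> i\<bar>}. 2 * (\<alpha> r)\<^sup>2 + 2 * (\<zeta> i)\<^sup>2)
      - (\<Sum>r\<in>{r\<in>{1..5}. - \<bar>\<zeta> i\<bar> \<le> \<alpha> r \<and> \<alpha> r < \<bar>\<zeta> i\<bar>}. (\<alpha> r - \<bar>\<zeta> i\<bar>)\<^sup>2)" for i
  have cF: "c_fun \<alpha> n \<zeta> = (1/2) * (\<Sum>i\<in>{1..n}. F i)" unfolding c_fun_def F_def by simp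
  have Fk: "F i \<le> 0 \<and> ((\<bar>\<zeta> i\<bar> < a \<and> \<not>(\<exists>r\<in>{1..5}. \<exists>s\<in>{1..5}. r\<noteq>s \<and> \<alpha> r + \<alpha> s = 0)) \<longrightarrow> F i < 0)"
    if i: "i \<in> {1..n}" for i
  proof -
    have t0: "0 \<le> \<bar>\<zeta> i\<bar>" by simp
    have zz: "\<alpha> 0 \<le> \<zeta> i" "\<zeta> i \<le> - \<alpha> 0" using assms(2) i by auto
    have ta: "\<bar>\<zeta> i\<bar> \<le> a" using zz unfolding a_def by (simp add: abs_le_iff)
    have Fe: "F i = 2 * \<bar>\<zeta> i\<bar>\<^sup>2 - 2 * a\<^sup>2 + (\<Sum>r\<in>{1..5::nat}. DD a \<bar>\<zeta> i\<bar> (\<alpha> r))"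
      unfolding F_def inner_eq a_def ..
    note K = key[OF fin a0 lb pw sw t0 ta]
    show ?thesis using K unfolding Fe by (simp add: algebra_simps)
  qed
  have le: "(\<Sum>i\<in>{1..n}. F i) \<le> 0" using Fk by (meson sum_nonpos)
  show ?thesis
  proof
    show "c_fun \<alpha> n \<zeta> \<le> 0" using le cF by simp
    show "c_fun \<alpha> n \<zeta> = 0 \<longrightarrow>
      (\<exists>r\<in>{1..5}. \<exists>s\<in>{1..5}. r < s \<and> \<alpha> r + \<alpha> s = 0) \<or>
      (\<forall>i\<in>{1..n}. \<zeta> i = \<alpha> 0 \<or> \<zeta> i = - \<alpha> 0)"
    proof (intro impI)
      assume c0: "c_fun \<alpha> n \<zeta> = 0"
      show "(\<exists>r\<in>{1..5}. \<exists>s\<in>{1..5}. r < s \<and> \<alpha> r + \<alpha> s = 0) \<or>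
        (\<forall>i\<in>{1..n}. \<zeta> i = \<alpha> 0 \<or> \<zeta> i = - \<alpha> 0)"
      proof (cases "\<exists>r\<in>{1..5::nat}. \<exists>s\<in>{1..5}. r\<noteq>s \<and> \<alpha> r + \<alpha> s = 0")
        case True
        then obtain r s where rs: "r\<in>{1..5::nat}" "s\<in>{1..5}" "r\<noteq>s" "\<alpha> r + \<alpha> s = 0" by blast
        show ?thesis
        proof (cases "r < s")
          case True then show ?thesis using rs by blast
        next
          case False then have "s < r" using rs by simp
          then show ?thesis using rs by (metis add.commute)
        qed
      next
        case False
        have s0: "(\<Sum>i\<in>{1..n}. - F i) = 0" using c0 cF by (simp add: sum_negf)
        have "\<forall>i\<in>{1..n}. - F i = 0"
          using s0 sum_nonneg_eq_0_iff[of "{1..n}" "\<lambda>i. - F i"] Fk by force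
        hence "\<forall>i\<in>{1..n}. \<not> \<bar>\<zeta> i\<bar> < a" using Fk False by force
        hence "\<forall>i\<in>{1..n}. \<bar>\<zeta> i\<bar> = a" using assms(2) a_def by force
        then have "\<forall>i\<in>{1..n}. \<zeta> i = \<alpha> 0 \<or> \<zeta> i = - \<alpha> 0"
          unfolding a_def by (metis abs_if minus_minus)
        then show ?thesis by blast
      qed
    qed
  qed
qed

end
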